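(* Let $k\ge 3$ and $n_1=\cdots=n_k\ge 2$. The number of distinct isomorphism classes of graphs in the LC orbit $\mathcal{O}(K_{n_1,\dots,n_k})$ is $\lfloor k/2\rfloor+k+1$.
   Context: $K_{n_1,\dots,n_k}$ is the complete $k$-partite graph with parts of sizes $n_1,\dots,n_k$. The local complement $c_v(G)$ complements the edges among the neighbours of $v$; $\mathcal{O}(G)$ is the set of all graphs on the labelled vertex set $V(G)$ obtainable from $G$ by finite sequences of local complements. *)

theory Defs
  imports Main
begin

text \<open>Simple graphs on a labelled vertex set V are given by a symmetric, irreflexive
edge predicate E that only relates vertices of V.\<close>

definition local_comp :: "('a \<Rightarrow> 'a \<Rightarrow> bool) \<Rightarrow> 'a \<Rightarrow> ('a \<Rightarrow> 'a \<Rightarrow> bool)" where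
  "local_comp E v = (\<lambda>x y. if x \<noteq> y \<and> E v x \<and> E v y then \<not> E x y else E x y)"

inductive_set lc_orbit :: "'a set \<Rightarrow> ('a \<Rightarrow> 'a \<Rightarrow> bool) \<Rightarrow> ('a \<Rightarrow> 'a \<Rightarrow> bool) set"
  for V G where
  base: "G \<in> lc_orbit V G"
| step: "H \<in> lc_orbit V G \<Longrightarrow> v \<in> V \<Longrightarrow> local_comp H v \<in> lc_orbit V G"

definition graph_iso :: "'a set \<Rightarrow> ('a \<Rightarrow> 'a \<Rightarrow> bool) \<Rightarrow> ('a \<Rightarrow> 'a \<Rightarrow> bool) \<Rightarrow> bool" where
  "graph_iso V E F \<longleftrightarrow> (\<exists>f. bij_betw f V V \<and> (\<forall>x\<in>V. \<forall>y\<in>V. E x y \<longleftrightarrow> F (f x) (f y)))"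

definition kpart_verts :: "nat \<Rightarrow> nat \<Rightarrow> (nat \<times> nat) set" where
  "kpart_verts k n = {0..<k} \<times> {0..<n}"

definition complete_kpartite :: "nat \<Rightarrow> nat \<Rightarrow> (nat \<times> nat) \<Rightarrow> (nat \<times> nat) \<Rightarrow> bool" where
  "complete_kpartite k n = (\<lambda>x y. x \<in> kpart_verts k n \<and> y \<in> kpart_verts k n \<and> fst x \<noteq> fst y)"

definition num_iso_classes :: "'a set \<Rightarrow> ('a \<Rightarrow> 'a \<Rightarrow> bool) set \<Rightarrow> nat" where
  "num_iso_classes V S = card (S // {(E, F). E \<in> S \<and> F \<in> S \<and> graph_iso V E F})"

end

theory Submission
  imports Defs
begin

datatype btype = TI | TC | TS

definition Qr :: "nat option \<Rightarrow> nat \<Rightarrow> nat \<Rightarrow> bool" where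
  "Qr q j l = (j \<noteq> l \<and> (case q of None \<Rightarrow> True | Some i \<Rightarrow> j = i \<or> l = i))"

definition lcq :: "nat option \<Rightarrow> nat \<Rightarrow> nat option" where
  "lcq q i = (case q of None \<Rightarrow> Some i | Some i0 \<Rightarrow> if i = i0 then None else Some i0)"

fun tog :: "btype \<Rightarrow> btype" where
  "tog TI = TC" | "tog TC = TI" | "tog TS = TS"

fun selft :: "btype \<Rightarrow> btype" where
  "selft TI = TI" | "selft TC = TS" | "selft TS = TC"

lemma tog_eq[simp]: "tog x = TI \<longleftrightarrow> x = TC" "tog x = TC \<longleftrightarrow> x = TI" "tog x = TS \<longleftrightarrow> x = TS"
  by (cases x; simp)+

lemma selft_eq[simp]: "selft x = TI \<longleftrightarrow> x = TI" "selft x = TC \<longleftrightarrow> x = TS" "selft x = TS \<longleftrightarrow> x = TC"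
  by (cases x; simp)+

definition newt :: "nat option \<Rightarrow> (nat \<Rightarrow> btype) \<Rightarrow> nat \<Rightarrow> nat \<Rightarrow> btype" where
  "newt q t i j = (if j = i then selft (t i) else if Qr q i j then tog (t j) else t j)"

definition GG :: "nat \<Rightarrow> nat \<Rightarrow> nat option \<Rightarrow> (nat \<Rightarrow> btype) \<Rightarrow> (nat \<Rightarrow> nat)
    \<Rightarrow> nat \<times> nat \<Rightarrow> nat \<times> nat \<Rightarrow> bool" where
  "GG k n q t c x y = (fst x < k \<and> snd x < n \<and> fst y < k \<and> snd y < n \<and> x \<noteq> y \<and>
     (if fst x = fst y then (t (fst x) = TC \<or> (t (fst x) = TS \<and> (snd x = c (fst x) \<or> snd y = c (fst y))))
      else Qr q (fst x) (fst y) \<and> (t (fst x) = TS \<longrightarrow> snd x = c (fst x)) \<and> (t (fst y) = TS \<longrightarrow> snd y = c (fst y))))"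

lemma Qr_lcq1: "Qr (lcq q i) i j = Qr q i j" "Qr (lcq q i) j i = Qr q j i"
  by (auto simp: Qr_def lcq_def split: option.splits)

lemma Qr_lcq2: "j \<noteq> l \<Longrightarrow> j \<noteq> i \<Longrightarrow> l \<noteq> i \<Longrightarrow> Qr (lcq q i) j l = (Qr q j l \<noteq> (Qr q i j \<and> Qr q i l))"
  by (auto simp: Qr_def lcq_def split: option.splits)

lemma Qr_sym: "Qr q j l = Qr q l j" by (auto simp: Qr_def split: option.splits)

lemma lc_id:
  assumes "t i = TS" "a \<noteq> c i"
  shows "local_comp (GG k n q t c) (i,a) = GG k n q t c"
proof -
  have "\<not> (x \<noteq> y \<and> GG k n q t c (i,a) x \<and> GG k n q t c (i,a) y)" for x y
  proof -
    have "GG k n q t c (i,a) z \<Longrightarrow> z = (i, c i)" for z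
      using assms by (cases z) (auto simp: GG_def split: if_splits)
    then show ?thesis by blast
  qed
  then show ?thesis by (auto simp: local_comp_def fun_eq_iff)
qed

lemma lc_formula:
  assumes "\<not> (t i = TS \<and> a \<noteq> c i)" "i < k" "a < n"
  shows "local_comp (GG k n q t c) (i,a) = GG k n (lcq q i) (newt q t i) (c(i:=a))"
proof (intro ext)
  fix x y :: "nat \<times> nat"
  obtain j b where x: "x = (j,b)" by fastforce
  obtain l d where y: "y = (l,d)" by fastforce
  show "local_comp (GG k n q t c) (i,a) x y = GG k n (lcq q i) (newt q t i) (c(i:=a)) x y"
    unfolding x y local_comp_def GG_def newt_def
    using assms
    apply (cases "j = i"; cases "l = i"; cases "j = l"; cases "t i"; cases "t j"; cases "t l")
    by (auto simp: Qr_lcq1 Qr_lcq2 Qr_sym)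
qed

definition Sset :: "nat \<Rightarrow> (nat \<Rightarrow> btype) \<Rightarrow> nat set" where
  "Sset k t = {j. j < k \<and> t j = TS}"

definition inv :: "nat \<Rightarrow> nat option \<Rightarrow> (nat \<Rightarrow> btype) \<Rightarrow> bool" where
  "inv k q t = (case q of None \<Rightarrow> (\<forall>j<k. t j \<noteq> TC) \<and> even (card (Sset k t))
     | Some i \<Rightarrow> i < k \<and> t i \<noteq> TS \<and> (\<forall>j<k. j \<noteq> i \<longrightarrow> t j \<noteq> TI) \<and> (t i = TI \<longleftrightarrow> even (card (Sset k t))))"

lemma Sset_newt: "i < k \<Longrightarrow> Sset k (newt q t i) =
   (if t i = TC then insert i (Sset k t) else if t i = TS then Sset k t - {i} else Sset k t)"
  apply (cases "t i")
    apply (auto simp: Sset_def newt_def)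
  done

lemma finite_Sset[simp]: "finite (Sset k t)" by (simp add: Sset_def)

lemma inv_step:
  assumes "inv k q t" "i < k" "\<not> (t i = TS \<and> a \<noteq> c i)"
  shows "inv k (lcq q i) (newt q t i)"
proof (cases q)
  case None
  then have ti: "t i \<noteq> TC" using assms by (auto simp: inv_def)
  show ?thesis
  proof (cases "t i")
    case TI
    then show ?thesis using assms None Sset_newt[OF assms(2), of q t]
      by (auto simp: inv_def lcq_def newt_def Qr_def)
  next
    case TC then show ?thesis using ti by simp
  next
    case TS
    have "i \<in> Sset k t" using TS assms by (simp add: Sset_def)
    then have "card (Sset k t - {i}) = card (Sset k t) - 1" "card (Sset k t) > 0"
      by (auto simp: card_gt_0_iff)
    then show ?thesis using assms None TS Sset_newt[OF assms(2), of q t]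
      by (auto simp: inv_def lcq_def newt_def Qr_def)
  qed
next
  case (Some i0)
  have i0: "i0 < k" "t i0 \<noteq> TS" "\<forall>j<k. j \<noteq> i0 \<longrightarrow> t j \<noteq> TI" "t i0 = TI \<longleftrightarrow> even (card (Sset k t))"
    using assms Some by (auto simp: inv_def)
  have Sins: "card (insert i (Sset k t)) = Suc (card (Sset k t))" if "t i \<noteq> TS"
    using that by (simp add: Sset_def)
  have Sdel: "card (Sset k t - {i}) = card (Sset k t) - 1 \<and> card (Sset k t) > 0" if "t i = TS"
  proof -
    have "i \<in> Sset k t" using that assms by (simp add: Sset_def)
    then show ?thesis by (auto simp: card_gt_0_iff)
  qed
  show ?thesis
  proof (cases "i = i0")
    case True
    have Q: "Qr q i j \<longleftrightarrow> j \<noteq> i" for j using True Some by (auto simp: Qr_def)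
    have L: "lcq q i = None" using True Some by (simp add: lcq_def)
    have N1: "newt q t i j \<noteq> TC" if "j < k" for j
    proof (cases "j = i")
      case True then show ?thesis using i0 \<open>i = i0\<close> by (simp add: newt_def)
    next
      case False then show ?thesis using i0 that Q \<open>i = i0\<close> by (simp add: newt_def)
    qed
    have N2: "even (card (Sset k (newt q t i)))"
    proof (cases "t i")
      case TI then show ?thesis using i0 True Sset_newt[OF assms(2), of q t] by simp
    next
      case TC then show ?thesis using i0 True Sset_newt[OF assms(2), of q t] Sins by simp
    next
      case TS then show ?thesis using i0 True by simp
    qed
    show ?thesis unfolding inv_def L using N1 N2 by simp
  next
    case False
    have Q: "Qr q i j \<longleftrightarrow> j = i0" for j using False Some by (auto simp: Qr_def)
    have L: "lcq q i = Some i0" using False Some by (simp add: lcq_def)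
    have tiI: "t i \<noteq> TI" using i0 False assms(2) by auto
    have N0: "newt q t i i0 = tog (t i0)" using False by (simp add: newt_def Q)
    have N1: "newt q t i j \<noteq> TI" if "j < k" "j \<noteq> i0" for j
    proof (cases "j = i")
      case True then show ?thesis using tiI by (simp add: newt_def)
    next
      case False then show ?thesis using i0 that Q by (simp add: newt_def)
    qed
    have N2: "odd (card (Sset k (newt q t i))) \<longleftrightarrow> even (card (Sset k t))"
    proof (cases "t i")
      case TI then show ?thesis using tiI by simp
    next
      case TC then show ?thesis using Sset_newt[OF assms(2), of q t] Sins by simp
    next
      case TS then show ?thesis using Sset_newt[OF assms(2), of q t] Sdel[OF TS]
        by (cases "card (Sset k t)") auto
    qed
    have N3: "tog (t i0) \<noteq> TS" "tog (t i0) = TI \<longleftrightarrow> t i0 \<noteq> TI"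
      using i0 by (cases "t i0"; simp)+
    show ?thesis unfolding inv_def L using N0 N1 N2 N3 i0 by auto
  qed
qed

definition Fam :: "nat \<Rightarrow> nat \<Rightarrow> ((nat \<times> nat) \<Rightarrow> (nat \<times> nat) \<Rightarrow> bool) set" where
  "Fam k n = {GG k n q t c | q t c. inv k q t \<and> (\<forall>j<k. c j < n)}"

lemma K_eq: "complete_kpartite k n = GG k n None (\<lambda>_. TI) (\<lambda>_. 0)"
  by (auto simp: complete_kpartite_def GG_def kpart_verts_def Qr_def fun_eq_iff)

lemma orbit_sub: assumes n0: "n > 0" shows "lc_orbit (kpart_verts k n) (complete_kpartite k n) \<subseteq> Fam k n"
proof
  fix H assume "H \<in> lc_orbit (kpart_verts k n) (complete_kpartite k n)"
  then show "H \<in> Fam k n"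
  proof induction
    case base
    have "inv k None (\<lambda>_. TI)" by (simp add: inv_def Sset_def)
    then show ?case using n0 unfolding K_eq Fam_def by auto
  next
    case (step H v)
    then obtain q t c where H: "H = GG k n q t c" "inv k q t" "\<forall>j<k. c j < n"
      using step.IH by (auto simp: Fam_def)
    obtain i a where v: "v = (i,a)" "i < k" "a < n" using step.hyps(2) by (auto simp: kpart_verts_def)
    show ?case
    proof (cases "t i = TS \<and> a \<noteq> c i")
      case True
      then show ?thesis using lc_id[of t i a c k n q] H v step.IH by simp
    next
      case False
      have "inv k (lcq q i) (newt q t i)" using inv_step[of k q t i a c] H(2) v(2) False by blast
      moreover have "\<forall>j<k. (c(i:=a)) j < n" using H v by auto
      moreover have eq: "local_comp H v = GG k n (lcq q i) (newt q t i) (c(i:=a))"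
        using lc_formula[of t i a c k n q] False H v by simp
      ultimately show ?thesis unfolding eq Fam_def mem_Collect_eq
        apply (intro exI[of _ "lcq q i"] exI[of _ "newt q t i"] exI[of _ "c(i:=a)"])
        by simp
    qed
  qed
qed



definition leafV :: "'a set \<Rightarrow> ('a \<Rightarrow> 'a \<Rightarrow> bool) \<Rightarrow> 'a \<Rightarrow> bool" where
  "leafV V E x = (\<exists>z\<in>V. E x z \<and> (\<forall>w\<in>V. E x w \<longrightarrow> w = z))"

definition PP :: "'a set \<Rightarrow> ('a \<Rightarrow> 'a \<Rightarrow> bool) \<Rightarrow> bool" where
  "PP V E = (\<exists>x\<in>V. \<exists>y\<in>V. x \<noteq> y \<and> \<not> E x y \<and> \<not> leafV V E x \<and> \<not> leafV V E y \<and> (\<exists>w\<in>V. E x w \<noteq> E y w))"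

definition phi :: "'a set \<Rightarrow> ('a \<Rightarrow> 'a \<Rightarrow> bool) \<Rightarrow> bool \<times> nat" where
  "phi V E = (PP V E, card {x\<in>V. leafV V E x})"

lemma two_nb_not_leaf: "y \<in> V \<Longrightarrow> z \<in> V \<Longrightarrow> y \<noteq> z \<Longrightarrow> E x y \<Longrightarrow> E x z \<Longrightarrow> \<not> leafV V E x"
  unfolding leafV_def by metis

lemma memV[simp]: "(i,a) \<in> kpart_verts k n \<longleftrightarrow> i < k \<and> a < n"
  by (simp add: kpart_verts_def)

lemma Qnb1:
  assumes "inv k q t" "k \<ge> 3" "i < k"
  shows "\<exists>j<k. Qr q i j"
proof (cases q)
  case None
  then show ?thesis using assms by (intro exI[of _ "if i = 0 then 1 else 0"]) (auto simp: Qr_def)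
next
  case (Some i0)
  show ?thesis
  proof (cases "i = i0")
    case True
    then show ?thesis using assms Some by (intro exI[of _ "if i = 0 then 1 else 0"]) (auto simp: Qr_def)
  next
    case False
    then show ?thesis using assms Some by (intro exI[of _ i0]) (auto simp: Qr_def inv_def)
  qed
qed

lemma Qnb2:
  assumes "inv k q t" "k \<ge> 3" "i < k" "t i = TI"
  shows "\<exists>j l. j < k \<and> l < k \<and> j \<noteq> l \<and> Qr q i j \<and> Qr q i l"
proof -
  have cen: "q = None \<or> q = Some i" using assms by (cases q) (auto simp: inv_def)
  obtain j l where "j < k" "l < k" "j \<noteq> l" "j \<noteq> i" "l \<noteq> i"
    using assms(2,3)
    by (intro that[of "if i = 0 then 1 else 0" "if i = 2 then 1 else 2"]) auto
  then show ?thesis using cen by (intro exI[of _ j] exI[of _ l]) (auto simp: Qr_def)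
qed

lemma leaf_char:
  assumes "inv k q t" "k \<ge> 3" "n \<ge> 2" "\<forall>j<k. c j < n" "i < k" "a < n"
  shows "leafV (kpart_verts k n) (GG k n q t c) (i,a) \<longleftrightarrow> t i = TS \<and> a \<noteq> c i"
proof
  assume L: "leafV (kpart_verts k n) (GG k n q t c) (i,a)"
  show "t i = TS \<and> a \<noteq> c i"
  proof (rule ccontr)
    assume nl: "\<not> (t i = TS \<and> a \<noteq> c i)"
    obtain j where j: "j < k" "Qr q i j" using Qnb1[OF assms(1,2,5)] by blast
    have ij: "i \<noteq> j" using j by (simp add: Qr_def)
    have n1: "GG k n q t c (i,a) (j, c j)" using j ij nl assms by (auto simp: GG_def)
    show False
    proof (cases "t i = TI")
      case True
      obtain j l where jl: "j < k" "l < k" "j \<noteq> l" "Qr q i j" "Qr q i l"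
        using Qnb2[OF assms(1,2,5) True] by blast
      have e1: "GG k n q t c (i,a) (j, c j)" and e2: "GG k n q t c (i,a) (l, c l)"
        using jl True assms by (auto simp: GG_def Qr_def)
      show False using two_nb_not_leaf[of "(j, c j)" "kpart_verts k n" "(l, c l)" "GG k n q t c" "(i,a)"] e1 e2 L jl assms by auto
    next
      case False
      obtain b where b: "b < n" "b \<noteq> a" using assms(3)
        by (intro that[of "if a = 0 then 1 else 0"]) auto
      have e2: "GG k n q t c (i,a) (i,b)" using b False nl assms by (cases "t i") (auto simp: GG_def)
      show False using two_nb_not_leaf[of "(j, c j)" "kpart_verts k n" "(i,b)" "GG k n q t c" "(i,a)"] n1 e2 L j b ij assms by auto
    qed
  qed
next
  assume A: "t i = TS \<and> a \<noteq> c i"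
  have "GG k n q t c (i,a) w \<Longrightarrow> w = (i, c i)" for w
  proof -
    assume w: "GG k n q t c (i,a) w"
    obtain j b where wj: "w = (j,b)" by fastforce
    show ?thesis using w A unfolding wj GG_def by (cases "j = i") auto
  qed
  moreover have "GG k n q t c (i,a) (i, c i)" using A assms by (auto simp: GG_def)
  moreover have "(i, c i) \<in> kpart_verts k n" using assms(4,5) by simp
  ultimately show "leafV (kpart_verts k n) (GG k n q t c) (i,a)"
    unfolding leafV_def by blast
qed

lemma leafset:
  assumes "inv k q t" "k \<ge> 3" "n \<ge> 2" "\<forall>j<k. c j < n"
  shows "{x \<in> kpart_verts k n. leafV (kpart_verts k n) (GG k n q t c) x} = Sigma (Sset k t) (\<lambda>j. {0..<n} - {c j})"
proof (intro set_eqI iffI)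
  fix x assume x: "x \<in> {x \<in> kpart_verts k n. leafV (kpart_verts k n) (GG k n q t c) x}"
  obtain i a where xi: "x = (i,a)" by fastforce
  have ia: "i < k" "a < n" using x xi by auto
  show "x \<in> Sigma (Sset k t) (\<lambda>j. {0..<n} - {c j})"
    using x leaf_char[OF assms ia] ia unfolding xi by (auto simp: Sset_def)
next
  fix x assume x: "x \<in> Sigma (Sset k t) (\<lambda>j. {0..<n} - {c j})"
  obtain i a where xi: "x = (i,a)" by fastforce
  have ia: "i < k" "a < n" using x xi by (auto simp: Sset_def)
  show "x \<in> {x \<in> kpart_verts k n. leafV (kpart_verts k n) (GG k n q t c) x}"
    using x leaf_char[OF assms ia] ia unfolding xi by (auto simp: Sset_def)
qed

lemma leafcount:
  assumes "inv k q t" "k \<ge> 3" "n \<ge> 2" "\<forall>j<k. c j < n"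
  shows "card {x \<in> kpart_verts k n. leafV (kpart_verts k n) (GG k n q t c) x} = card (Sset k t) * (n - 1)"
proof -
  have "card (Sigma (Sset k t) (\<lambda>j. {0..<n} - {c j})) = (\<Sum>j\<in>Sset k t. card ({0..<n} - {c j}))"
    by simp
  also have "\<dots> = (\<Sum>j\<in>Sset k t. n - 1)"
    using assms(4) by (intro sum.cong) (auto simp: Sset_def)
  finally show ?thesis using leafset[OF assms] by simp
qed

lemma PP_char:
  assumes "inv k q t" "k \<ge> 3" "n \<ge> 2" "\<forall>j<k. c j < n"
  shows "PP (kpart_verts k n) (GG k n q t c) \<longleftrightarrow> q \<noteq> None"
proof
  assume P: "PP (kpart_verts k n) (GG k n q t c)"
  show "q \<noteq> None"
  proof
    assume N: "q = None"
    have tt: "t j \<noteq> TC" if "j < k" for j using assms(1) N that by (simp add: inv_def)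
    obtain x y w where xy: "x \<in> kpart_verts k n" "y \<in> kpart_verts k n" "x \<noteq> y"
      "\<not> GG k n q t c x y" "\<not> leafV (kpart_verts k n) (GG k n q t c) x"
      "\<not> leafV (kpart_verts k n) (GG k n q t c) y" "GG k n q t c x w \<noteq> GG k n q t c y w"
      using P unfolding PP_def by blast
    obtain i a where xi: "x = (i,a)" by fastforce
    obtain j b where yj: "y = (j,b)" by fastforce
    obtain l d where wl: "w = (l,d)" by fastforce
    have ia: "i < k" "a < n" "j < k" "b < n" using xy xi yj by auto
    have nlx: "\<not> (t i = TS \<and> a \<noteq> c i)" using xy(5) leaf_char[OF assms ia(1,2)] xi by simp
    have nly: "\<not> (t j = TS \<and> b \<noteq> c j)" using xy(6) leaf_char[OF assms ia(3,4)] yj by simp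
    have tti: "t i \<noteq> TC" "t j \<noteq> TC" using tt ia by auto
    show False
    proof (cases "i = j")
      case False
      then show False using xy(4) nlx nly ia unfolding xi yj GG_def N Qr_def by auto
    next
      case True
      then have "t i = TI" using xy(3) nlx nly tti unfolding xi yj by (cases "t i") auto
      then show False using xy(7) True ia xy(3) unfolding xi yj wl GG_def N Qr_def by (cases "l = i") auto
    qed
  qed
next
  assume "q \<noteq> None"
  then obtain i0 where S: "q = Some i0" by blast
  have i0: "i0 < k" "\<forall>j<k. j \<noteq> i0 \<longrightarrow> t j \<noteq> TI" using assms(1) S by (auto simp: inv_def)
  obtain j l where jl: "j < k" "l < k" "j \<noteq> l" "j \<noteq> i0" "l \<noteq> i0"
    using assms(2) i0(1)
    by (intro that[of "if i0 = 0 then 1 else 0" "if i0 = 2 then 1 else 2"]) auto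
  obtain b where b: "b < n" "b \<noteq> c j" using assms(3)
    by (intro that[of "if c j = 0 then 1 else 0"]) auto
  have cj: "c j < n" "c l < n" using assms(4) jl by auto
  have tj: "t j \<noteq> TI" "t l \<noteq> TI" using i0 jl by auto
  have nl1: "\<not> leafV (kpart_verts k n) (GG k n q t c) (j, c j)" using leaf_char[OF assms jl(1) cj(1)] by simp
  have nl2: "\<not> leafV (kpart_verts k n) (GG k n q t c) (l, c l)" using leaf_char[OF assms jl(2) cj(2)] by simp
  have ne: "\<not> GG k n q t c (j, c j) (l, c l)" using jl S by (simp add: GG_def Qr_def)
  have w1: "GG k n q t c (j, c j) (j, b)" using tj b jl cj by (cases "t j") (auto simp: GG_def)
  have w2: "\<not> GG k n q t c (l, c l) (j, b)" using jl S by (simp add: GG_def Qr_def)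
  show "PP (kpart_verts k n) (GG k n q t c)"
    unfolding PP_def
    apply (rule bexI[of _ "(j, c j)"], rule bexI[of _ "(l, c l)"])
    using jl nl1 nl2 ne w1 w2 b cj by (auto intro!: bexI[of _ "(j,b)"])
qed

lemma iso_sym:
  assumes "graph_iso V E F" shows "graph_iso V F E"
proof -
  obtain f where f: "bij_betw f V V" "\<forall>x\<in>V. \<forall>y\<in>V. E x y \<longleftrightarrow> F (f x) (f y)"
    using assms unfolding graph_iso_def by blast
  let ?g = "inv_into V f"
  have g: "bij_betw ?g V V" using f(1) by (rule bij_betw_inv_into)
  have fg: "f (?g x) = x" if "x \<in> V" for x using f(1) that by (simp add: bij_betw_inv_into_right)
  have gV: "?g x \<in> V" if "x \<in> V" for x using g that by (meson bij_betwE)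
  have "\<forall>x\<in>V. \<forall>y\<in>V. F x y \<longleftrightarrow> E (?g x) (?g y)"
  proof (intro ballI)
    fix x y assume "x \<in> V" "y \<in> V"
    then show "F x y \<longleftrightarrow> E (?g x) (?g y)" using f(2)[rule_format, OF gV gV] fg by simp
  qed
  then show ?thesis unfolding graph_iso_def using g by blast
qed

lemma iso_leaf:
  assumes "bij_betw f V V" "\<forall>x\<in>V. \<forall>y\<in>V. E x y \<longleftrightarrow> F (f x) (f y)" "x \<in> V" "leafV V E x"
  shows "leafV V F (f x)"
proof -
  obtain z where z: "z \<in> V" "E x z" "\<forall>w\<in>V. E x w \<longrightarrow> w = z" using assms(4) unfolding leafV_def by blast
  have sur: "\<exists>w\<in>V. w' = f w" if "w' \<in> V" for w' using assms(1) that by (metis bij_betw_imp_surj_on imageE)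
  have fV: "f w \<in> V" if "w \<in> V" for w using assms(1) that by (meson bij_betwE)
  show ?thesis unfolding leafV_def
  proof (intro bexI[of _ "f z"] conjI ballI impI)
    show "F (f x) (f z)" using assms(2,3) z by blast
    show "f z \<in> V" using fV z by blast
    fix w' assume "w' \<in> V" "F (f x) w'"
    then obtain w where "w \<in> V" "w' = f w" using sur by blast
    then show "w' = f z" using \<open>F (f x) w'\<close> assms(2,3) z by blast
  qed
qed

lemma iso_leaf_iff:
  assumes "bij_betw f V V" "\<forall>x\<in>V. \<forall>y\<in>V. E x y \<longleftrightarrow> F (f x) (f y)" "x \<in> V"
  shows "leafV V F (f x) \<longleftrightarrow> leafV V E x"
proof
  show "leafV V E x \<Longrightarrow> leafV V F (f x)" using iso_leaf[OF assms] .
next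
  let ?g = "inv_into V f"
  have g: "bij_betw ?g V V" using assms(1) by (rule bij_betw_inv_into)
  have fg: "f (?g x) = x" if "x \<in> V" for x using assms(1) that by (simp add: bij_betw_inv_into_right)
  have gf: "?g (f x) = x" if "x \<in> V" for x using assms(1) that by (simp add: bij_betw_inv_into_left)
  have gV: "?g x \<in> V" if "x \<in> V" for x using g that by (meson bij_betwE)
  have fV: "f w \<in> V" if "w \<in> V" for w using assms(1) that by (meson bij_betwE)
  have H: "\<forall>x\<in>V. \<forall>y\<in>V. F x y \<longleftrightarrow> E (?g x) (?g y)"
  proof (intro ballI)
    fix x y assume "x \<in> V" "y \<in> V"
    then show "F x y \<longleftrightarrow> E (?g x) (?g y)" using assms(2)[rule_format, OF gV gV] fg by simp
  qed
  assume "leafV V F (f x)"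
  from iso_leaf[OF g H fV[OF assms(3)] this] show "leafV V E x" using gf assms(3) by simp
qed

lemma PP_iso:
  assumes "bij_betw f V V" "\<forall>x\<in>V. \<forall>y\<in>V. E x y \<longleftrightarrow> F (f x) (f y)" "PP V E"
  shows "PP V F"
proof -
  obtain x y w where xy: "x \<in> V" "y \<in> V" "x \<noteq> y" "\<not> E x y" "\<not> leafV V E x" "\<not> leafV V E y"
     "w \<in> V" "E x w \<noteq> E y w"
    using assms(3) unfolding PP_def by blast
  have fV: "f w \<in> V" if "w \<in> V" for w using assms(1) that by (meson bij_betwE)
  have inj: "inj_on f V" using assms(1) by (simp add: bij_betw_def)
  have "f x \<noteq> f y" using inj xy by (meson inj_on_contraD)
  moreover have "\<not> F (f x) (f y)" using assms(2) xy by blast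
  moreover have "\<not> leafV V F (f x)" "\<not> leafV V F (f y)" using iso_leaf_iff[OF assms(1,2)] xy by auto
  moreover have "F (f x) (f w) \<noteq> F (f y) (f w)" using assms(2) xy by blast
  ultimately show ?thesis unfolding PP_def using xy fV by blast
qed

lemma phi_iso:
  assumes "graph_iso V E F" "finite V"
  shows "phi V E = phi V F"
proof -
  obtain f where f: "bij_betw f V V" "\<forall>x\<in>V. \<forall>y\<in>V. E x y \<longleftrightarrow> F (f x) (f y)"
    using assms unfolding graph_iso_def by blast
  obtain g where g: "bij_betw g V V" "\<forall>x\<in>V. \<forall>y\<in>V. F x y \<longleftrightarrow> E (g x) (g y)"
    using iso_sym[OF assms(1)] unfolding graph_iso_def by blast
  have P1: "PP V E \<Longrightarrow> PP V F" by (rule PP_iso[OF f])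
  have P2: "PP V F \<Longrightarrow> PP V E" by (rule PP_iso[OF g])
  have P: "PP V E = PP V F" using P1 P2 by (rule iffI)
  have fV: "f w \<in> V" if "w \<in> V" for w using f(1) that by (meson bij_betwE)
  have sur: "\<exists>w\<in>V. w' = f w" if "w' \<in> V" for w' using f(1) that by (metis bij_betw_imp_surj_on imageE)
  have "{x \<in> V. leafV V F x} = f ` {x \<in> V. leafV V E x}"
  proof (intro set_eqI iffI)
    fix x' assume "x' \<in> {x \<in> V. leafV V F x}"
    then have x'V: "x' \<in> V" "leafV V F x'" by auto
    then obtain x where x: "x \<in> V" "x' = f x" using sur by blast
    then have "leafV V E x" using iso_leaf_iff[OF f x(1)] x'V by simp
    then show "x' \<in> f ` {x \<in> V. leafV V E x}" using x by blast
  next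
    fix x' assume "x' \<in> f ` {x \<in> V. leafV V E x}"
    then obtain x where x: "x \<in> V" "leafV V E x" "x' = f x" by blast
    then show "x' \<in> {x \<in> V. leafV V F x}" using iso_leaf_iff[OF f x(1)] fV by simp
  qed
  moreover have "inj_on f {x \<in> V. leafV V E x}"
    by (rule inj_on_subset[of f V]) (use f(1) in \<open>auto simp: bij_betw_def\<close>)
  ultimately have "card {x \<in> V. leafV V F x} = card {x \<in> V. leafV V E x}" by (simp add: card_image)
  then show ?thesis using P by (simp add: phi_def)
qed

lemma perm_exists:
  fixes tau :: "'a \<Rightarrow> 'c" and tau' :: "'b \<Rightarrow> 'c"
  assumes "finite A" "finite A'" "\<And>b. card {a\<in>A. tau a = b} = card {a\<in>A'. tau' a = b}"
  shows "\<exists>p. bij_betw p A A' \<and> (\<forall>a\<in>A. tau' (p a) = tau a)"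
proof -
  have "\<forall>b. \<exists>h. bij_betw h {a\<in>A. tau a = b} {a\<in>A'. tau' a = b}"
    using assms by (intro allI finite_same_card_bij) auto
  then obtain g where g: "\<And>b. bij_betw (g b) {a\<in>A. tau a = b} {a\<in>A'. tau' a = b}" by metis
  define p where "p a = g (tau a) a" for a
  have pm: "p a \<in> A' \<and> tau' (p a) = tau a" if "a \<in> A" for a
  proof -
    have "a \<in> {x\<in>A. tau x = tau a}" using that by simp
    then have "g (tau a) a \<in> {x\<in>A'. tau' x = tau a}" using g[of "tau a"] by (meson bij_betwE)
    then show ?thesis by (simp add: p_def)
  qed
  have inj: "inj_on p A"
  proof (rule inj_onI)
    fix a1 a2 assume a: "a1 \<in> A" "a2 \<in> A" "p a1 = p a2"
    then have e: "tau a1 = tau a2" using pm by metis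
    have "inj_on (g (tau a1)) {x\<in>A. tau x = tau a1}" using g[of "tau a1"] by (simp add: bij_betw_def)
    moreover have "g (tau a1) a1 = g (tau a1) a2" using a(3) e by (simp add: p_def)
    ultimately show "a1 = a2" using a e by (auto dest: inj_onD)
  qed
  have sur: "A' \<subseteq> p ` A"
  proof
    fix a' assume a': "a' \<in> A'"
    have "a' \<in> {x\<in>A'. tau' x = tau' a'}" using a' by simp
    then have "a' \<in> g (tau' a') ` {x\<in>A. tau x = tau' a'}" using g[of "tau' a'"] by (simp add: bij_betw_def)
    then obtain a where "a \<in> A" "tau a = tau' a'" "a' = g (tau' a') a" by auto
    then have "a' = p a" by (simp add: p_def)
    then show "a' \<in> p ` A" using \<open>a \<in> A\<close> by blast
  qed
  have "p ` A = A'" using sur pm by auto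
  then show ?thesis using inj pm unfolding bij_betw_def by blast
qed

definition sw :: "nat \<Rightarrow> nat \<Rightarrow> nat \<Rightarrow> nat" where
  "sw a b x = (if x = a then b else if x = b then a else x)"

lemma sw_inj: "sw a b x = sw a b y \<longleftrightarrow> x = y" by (auto simp: sw_def)
lemma sw_lt: "a < n \<Longrightarrow> b < n \<Longrightarrow> x < n \<Longrightarrow> sw a b x < n" by (auto simp: sw_def)
lemma sw_eq: "sw a b x = b \<longleftrightarrow> x = a" by (auto simp: sw_def)

lemma iso_GG:
  assumes p: "bij_betw p {0..<k} {0..<k}" and tt: "\<forall>j<k. t' (p j) = t j"
    and QQ: "\<forall>j<k. \<forall>l<k. Qr q j l \<longleftrightarrow> Qr q' (p j) (p l)"
    and cw: "\<forall>j<k. c j < n" and cw': "\<forall>j<k. c' j < n"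
  shows "graph_iso (kpart_verts k n) (GG k n q t c) (GG k n q' t' c')"
proof -
  define f where "f x = (p (fst x), sw (c (fst x)) (c' (p (fst x))) (snd x))" for x
  have pk: "p j < k" if "j < k" for j using p that by (meson atLeastLessThan_iff bij_betwE zero_le)
  have pinj: "p j = p l \<longleftrightarrow> j = l" if "j < k" "l < k" for j l
    using p that unfolding bij_betw_def inj_on_def by auto
  have fV: "f x \<in> kpart_verts k n" if "x \<in> kpart_verts k n" for x
    using that pk cw cw' sw_lt by (cases x) (auto simp: f_def)
  have finj: "inj_on f (kpart_verts k n)"
  proof (rule inj_onI)
    fix x y assume xy: "x \<in> kpart_verts k n" "y \<in> kpart_verts k n" "f x = f y"
    obtain j b where x: "x = (j,b)" by fastforce
    obtain l d where y: "y = (l,d)" by fastforce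
    have "j = l" using xy pinj unfolding x y f_def by auto
    then show "x = y" using xy unfolding x y f_def by (simp add: sw_inj)
  qed
  have "f ` kpart_verts k n = kpart_verts k n"
  proof (rule endo_inj_surj)
    show "finite (kpart_verts k n)" by (simp add: kpart_verts_def)
    show "f ` kpart_verts k n \<subseteq> kpart_verts k n" using fV by blast
    show "inj_on f (kpart_verts k n)" by (rule finj)
  qed
  then have fb: "bij_betw f (kpart_verts k n) (kpart_verts k n)" using finj by (simp add: bij_betw_def)
  have edge: "GG k n q t c x y \<longleftrightarrow> GG k n q' t' c' (f x) (f y)"
    if "x \<in> kpart_verts k n" "y \<in> kpart_verts k n" for x y
  proof -
    obtain j b where x: "x = (j,b)" by fastforce
    obtain l d where y: "y = (l,d)" by fastforce
    have jl: "j < k" "b < n" "l < k" "d < n" using that x y by auto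
    have e1: "p j = p l \<longleftrightarrow> j = l" using pinj jl by simp
    have e2: "t' (p j) = t j" "t' (p l) = t l" using tt jl by auto
    have e3: "sw (c j) (c' (p j)) b = c' (p j) \<longleftrightarrow> b = c j" "sw (c l) (c' (p l)) d = c' (p l) \<longleftrightarrow> d = c l"
      by (simp_all add: sw_eq)
    have e4: "Qr q' (p j) (p l) \<longleftrightarrow> Qr q j l" using QQ jl by simp
    have e5: "sw (c j) (c' (p j)) b < n" "sw (c l) (c' (p l)) d < n" "p j < k" "p l < k"
      using sw_lt cw cw' pk jl by auto
    have e6: "j = l \<Longrightarrow> sw (c j) (c' (p j)) b = sw (c l) (c' (p l)) d \<longleftrightarrow> b = d" by (simp add: sw_inj)
    show ?thesis unfolding x y f_def GG_def using jl e1 e2 e3 e4 e5 e6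
      by (cases "j = l") auto
  qed
  show ?thesis unfolding graph_iso_def using fb edge by blast
qed

lemma fib_card:
  assumes fA: "finite A" and fA': "finite A'" and cA: "card A = card A'"
    and nX: "\<forall>a\<in>A. t a \<noteq> X" and nX': "\<forall>a\<in>A'. t' a \<noteq> X"
    and XY: "\<forall>b. b = X \<or> b = Y \<or> b = TS" "Y \<noteq> TS"
    and cS: "card {a\<in>A. t a = TS} = card {a\<in>A'. t' a = TS}"
  shows "card {a\<in>A. t a = b} = card {a\<in>A'. t' a = b}"
proof -
  have dY: "{a\<in>A. t a = Y} = A - {a\<in>A. t a = TS}"
  proof (intro set_eqI iffI)
    fix a assume "a \<in> A - {a\<in>A. t a = TS}" then show "a \<in> {a\<in>A. t a = Y}" using nX XY(1)[rule_format, of "t a"] by auto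
  qed (use XY(2) in auto)
  have dY': "{a\<in>A'. t' a = Y} = A' - {a\<in>A'. t' a = TS}"
  proof (intro set_eqI iffI)
    fix a assume "a \<in> A' - {a\<in>A'. t' a = TS}" then show "a \<in> {a\<in>A'. t' a = Y}" using nX' XY(1)[rule_format, of "t' a"] by auto
  qed (use XY(2) in auto)
  have cY: "card {a\<in>A. t a = Y} = card {a\<in>A'. t' a = Y}"
    unfolding dY dY' using fA fA' cA cS by (simp add: card_Diff_subset)
  consider "b = X" | "b = Y" | "b = TS" using XY(1) by blast
  then show ?thesis
  proof cases
    case 1
    have "{a\<in>A. t a = b} = {}" using 1 nX by blast
    moreover have "{a\<in>A'. t' a = b} = {}" using 1 nX' by blast
    ultimately show ?thesis by (simp only: card.empty)
  next
    case 2 then show ?thesis using cY by simp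
  next
    case 3 then show ?thesis using cS by simp
  qed
qed

lemma iso_same:
  assumes inv1: "inv k q t" and inv2: "inv k q' t'" and cw: "\<forall>j<k. c j < n" and cw': "\<forall>j<k. c' j < n"
    and qq: "(q = None) = (q' = None)" and cs: "card (Sset k t) = card (Sset k t')"
  shows "graph_iso (kpart_verts k n) (GG k n q t c) (GG k n q' t' c')"
proof (cases q)
  case None
  then have N': "q' = None" using qq by simp
  have h1: "\<forall>a\<in>{0..<k}. t a \<noteq> TC" "\<forall>a\<in>{0..<k}. t' a \<noteq> TC"
    using inv1 inv2 None N' by (auto simp: inv_def)
  have S1: "{a\<in>{0..<k}. t a = TS} = Sset k t" "{a\<in>{0..<k}. t' a = TS} = Sset k t'"
    by (auto simp: Sset_def)
  have "card {a\<in>{0..<k}. t a = b} = card {a\<in>{0..<k}. t' a = b}" for b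
  proof (rule fib_card[where X = TC and Y = TI])
    show "\<forall>b. b = TC \<or> b = TI \<or> b = TS" by (metis btype.exhaust)
  qed (use h1 S1 cs in simp_all)
  then obtain p where p: "bij_betw p {0..<k} {0..<k}" "\<forall>a\<in>{0..<k}. t' (p a) = t a"
    using perm_exists[of "{0..<k}" "{0..<k}" t t'] by auto
  have pinj: "p j = p l \<longleftrightarrow> j = l" if "j < k" "l < k" for j l
    using p(1) that unfolding bij_betw_def inj_on_def by auto
  show ?thesis
    by (rule iso_GG[OF p(1)]) (use p(2) pinj cw cw' None N' in \<open>auto simp: Qr_def\<close>)
next
  case (Some i)
  then obtain i' where S': "q' = Some i'" using qq by auto
  have i: "i < k" "t i \<noteq> TS" "\<forall>j<k. j \<noteq> i \<longrightarrow> t j \<noteq> TI" "t i = TI \<longleftrightarrow> even (card (Sset k t))"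
    using inv1 Some by (auto simp: inv_def)
  have i': "i' < k" "t' i' \<noteq> TS" "\<forall>j<k. j \<noteq> i' \<longrightarrow> t' j \<noteq> TI" "t' i' = TI \<longleftrightarrow> even (card (Sset k t'))"
    using inv2 S' by (auto simp: inv_def)
  have tii: "t' i' = t i" using i(2,4) i'(2,4) cs by (cases "t i"; cases "t' i'") auto
  let ?A = "{0..<k} - {i}" and ?A' = "{0..<k} - {i'}"
  have h1: "\<forall>a\<in>?A. t a \<noteq> TI" "\<forall>a\<in>?A'. t' a \<noteq> TI" using i i' by auto
  have S1: "{a\<in>?A. t a = TS} = Sset k t" "{a\<in>?A'. t' a = TS} = Sset k t'"
    using i(2) i'(2) by (auto simp: Sset_def)
  have cA: "card ?A = card ?A'" using i(1) i'(1) by simp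
  have "card {a\<in>?A. t a = b} = card {a\<in>?A'. t' a = b}" for b
  proof (rule fib_card[where X = TI and Y = TC])
    show "\<forall>b. b = TI \<or> b = TC \<or> b = TS" by (metis btype.exhaust)
  qed (use h1 S1 cs cA in simp_all)
  then obtain p0 where p0: "bij_betw p0 ?A ?A'" "\<forall>a\<in>?A. t' (p0 a) = t a"
    using perm_exists[of ?A ?A' t t'] by auto
  define p where "p = p0(i := i')"
  have pA: "p j \<in> ?A'" if "j \<in> ?A" for j
  proof -
    have "p0 j \<in> ?A'" using bij_betwE[OF p0(1)] that by blast
    moreover have "p j = p0 j" using that by (simp add: p_def)
    ultimately show ?thesis by simp
  qed
  have pinj0: "p j = p l \<longleftrightarrow> j = l" if "j \<in> ?A" "l \<in> ?A" for j l
  proof -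
    have "inj_on p0 ?A" using p0(1) by (simp add: bij_betw_def)
    moreover have "p j = p0 j" "p l = p0 l" using that by (auto simp: p_def)
    ultimately show ?thesis using that by (metis inj_onD)
  qed
  have pinj: "p j = p l \<longleftrightarrow> j = l" if "j < k" "l < k" for j l
  proof (cases "j = i"; cases "l = i")
    assume "j \<noteq> i" "l \<noteq> i" then show ?thesis using pinj0 that by simp
  next
    assume "j = i" "l \<noteq> i" then show ?thesis using pA[of l] that by (auto simp: p_def)
  next
    assume "j \<noteq> i" "l = i" then show ?thesis using pA[of j] that by (auto simp: p_def)
  qed simp
  have pi: "p j = i' \<longleftrightarrow> j = i" if "j < k" for j
    using pA[of j] that by (cases "j = i") (auto simp: p_def)
  have pk: "p j < k" if "j < k" for j using pA[of j] that i' by (cases "j = i") (auto simp: p_def)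
  have img: "p ` {0..<k} = {0..<k}"
  proof (rule endo_inj_surj)
    show "finite {0..<k}" by simp
    show "p ` {0..<k} \<subseteq> {0..<k}" using pk by auto
    show "inj_on p {0..<k}" using pinj by (auto intro: inj_onI)
  qed
  have pb: "bij_betw p {0..<k} {0..<k}" unfolding bij_betw_def using img pinj by (auto intro: inj_onI)
  have tt: "\<forall>j<k. t' (p j) = t j"
  proof (intro allI impI)
    fix j assume "j < k"
    then show "t' (p j) = t j" using tii p0(2) by (cases "j = i") (auto simp: p_def)
  qed
  show ?thesis
    by (rule iso_GG[OF pb tt]) (use pinj pi cw cw' Some S' in \<open>auto simp: Qr_def\<close>)
qed

lemma phi_GG:
  assumes "inv k q t" "k \<ge> 3" "n \<ge> 2" "\<forall>j<k. c j < n"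
  shows "phi (kpart_verts k n) (GG k n q t c) = (q \<noteq> None, card (Sset k t) * (n - 1))"
  using PP_char[OF assms] leafcount[OF assms] by (simp add: phi_def)

lemma card_quot:
  assumes "\<forall>E\<in>Orb. \<forall>F\<in>Orb. R E F \<longleftrightarrow> g E = g F"
  shows "card (Orb // {(E,F). E \<in> Orb \<and> F \<in> Orb \<and> R E F}) = card (g ` Orb)"
proof -
  let ?r = "{(E,F). E \<in> Orb \<and> F \<in> Orb \<and> R E F}"
  let ?h = "\<lambda>v. {F\<in>Orb. g F = v}"
  have cl: "?r `` {E} = ?h (g E)" if "E \<in> Orb" for E using assms that by auto
  have "Orb // ?r = (\<lambda>E. ?r `` {E}) ` Orb" unfolding quotient_def by auto
  also have "\<dots> = (\<lambda>E. ?h (g E)) ` Orb" using cl by (auto intro: image_cong)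
  also have "\<dots> = ?h ` (g ` Orb)" by (simp add: image_image)
  finally have eq: "Orb // ?r = ?h ` (g ` Orb)" .
  have "inj_on ?h (g ` Orb)"
  proof (rule inj_onI)
    fix v w assume "v \<in> g ` Orb" "w \<in> g ` Orb" "?h v = ?h w"
    then obtain E where "E \<in> Orb" "g E = v" by blast
    then have "E \<in> ?h v" by simp
    then have "E \<in> ?h w" using \<open>?h v = ?h w\<close> by simp
    then show "v = w" using \<open>g E = v\<close> by simp
  qed
  then show ?thesis unfolding eq by (rule card_image)
qed

definition ts :: "nat \<Rightarrow> nat \<Rightarrow> btype" where
  "ts s j = (if j = 0 then (if even s then TI else TC) else if j \<le> s then TS else TC)"

lemma Sset_ts: "s < k \<Longrightarrow> Sset k (ts s) = {1..s}"
  by (auto simp: Sset_def ts_def)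

lemma inv_ts: "s < k \<Longrightarrow> inv k (Some 0) (ts s)"
  using Sset_ts[of s k] by (auto simp: inv_def ts_def)

lemma ts_reach:
  assumes "s < k" "n \<ge> 2"
  shows "GG k n (Some 0) (ts s) (\<lambda>_. 0) \<in> lc_orbit (kpart_verts k n) (complete_kpartite k n)"
  using assms(1)
proof (induction s)
  case 0
  have "local_comp (complete_kpartite k n) (0,0) \<in> lc_orbit (kpart_verts k n) (complete_kpartite k n)"
    using 0 assms(2) by (intro lc_orbit.step lc_orbit.base) auto
  moreover have "local_comp (complete_kpartite k n) (0,0) = GG k n (lcq None 0) (newt None (\<lambda>_. TI) 0) ((\<lambda>_. 0)(0 := 0))"
    unfolding K_eq using 0 assms(2) by (intro lc_formula) auto
  moreover have "lcq None 0 = Some 0" by (simp add: lcq_def)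
  moreover have "newt None (\<lambda>_. TI) 0 = ts 0" by (auto simp: newt_def ts_def Qr_def fun_eq_iff)
  moreover have "((\<lambda>_. 0)(0 := 0)) = (\<lambda>_::nat. 0::nat)" by auto
  ultimately show ?case by simp
next
  case (Suc s)
  then have IH: "GG k n (Some 0) (ts s) (\<lambda>_. 0) \<in> lc_orbit (kpart_verts k n) (complete_kpartite k n)" by simp
  have "local_comp (GG k n (Some 0) (ts s) (\<lambda>_. 0)) (Suc s, 0) \<in> lc_orbit (kpart_verts k n) (complete_kpartite k n)"
    using Suc.prems assms(2) IH by (intro lc_orbit.step) auto
  moreover have "local_comp (GG k n (Some 0) (ts s) (\<lambda>_. 0)) (Suc s, 0) = GG k n (lcq (Some 0) (Suc s)) (newt (Some 0) (ts s) (Suc s)) ((\<lambda>_. 0)(Suc s := 0))"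
    using Suc.prems assms(2) by (intro lc_formula) (auto simp: ts_def)
  moreover have "lcq (Some 0) (Suc s) = Some 0" by (simp add: lcq_def)
  moreover have "newt (Some 0) (ts s) (Suc s) = ts (Suc s)" by (auto simp: newt_def ts_def Qr_def fun_eq_iff)
  moreover have "((\<lambda>_. 0)(Suc s := 0)) = (\<lambda>_::nat. 0::nat)" by auto
  ultimately show ?case by simp
qed

lemma card_even: "card {m::nat. m \<le> k \<and> even m} = k div 2 + 1"
proof -
  have "{m::nat. m \<le> k \<and> even m} = (\<lambda>i. 2*i) ` {..k div 2}"
  proof (intro set_eqI iffI)
    fix m assume "m \<in> {m::nat. m \<le> k \<and> even m}"
    then show "m \<in> (\<lambda>i. 2*i) ` {..k div 2}" by (auto intro!: image_eqI[of _ _ "m div 2"])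
  qed auto
  moreover have "inj_on (\<lambda>i::nat. 2*i) {..k div 2}" by (auto intro: inj_onI)
  ultimately show ?thesis by (simp add: card_image)
qed

theorem theorem15:
  fixes k n :: nat
  assumes "k \<ge> 3" and "n \<ge> 2"
  shows "num_iso_classes (kpart_verts k n)
           (lc_orbit (kpart_verts k n) (complete_kpartite k n)) = k div 2 + k + 1"
proof -
  let ?V = "kpart_verts k n"
  let ?O = "lc_orbit ?V (complete_kpartite k n)"
  have fV: "finite ?V" by (simp add: kpart_verts_def)
  have sub: "?O \<subseteq> Fam k n" using orbit_sub[of n k] assms by simp
  have rep: "\<exists>q t c. E = GG k n q t c \<and> inv k q t \<and> (\<forall>j<k. c j < n)" if "E \<in> ?O" for E
    using sub that unfolding Fam_def by blast
  have iso_iff: "\<forall>E\<in>?O. \<forall>F\<in>?O. graph_iso ?V E F \<longleftrightarrow> phi ?V E = phi ?V F"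
  proof (intro ballI iffI)
    fix E F assume "E \<in> ?O" "F \<in> ?O" "graph_iso ?V E F"
    then show "phi ?V E = phi ?V F" using phi_iso fV by blast
  next
    fix E F assume E: "E \<in> ?O" and F: "F \<in> ?O" and ph: "phi ?V E = phi ?V F"
    obtain q t c where Eq: "E = GG k n q t c" "inv k q t" "\<forall>j<k. c j < n" using rep[OF E] by blast
    obtain q' t' c' where Fq: "F = GG k n q' t' c'" "inv k q' t'" "\<forall>j<k. c' j < n" using rep[OF F] by blast
    have "(q \<noteq> None, card (Sset k t) * (n - 1)) = (q' \<noteq> None, card (Sset k t') * (n - 1))"
      using ph phi_GG[OF Eq(2) assms Eq(3)] phi_GG[OF Fq(2) assms Fq(3)] Eq(1) Fq(1) by simp
    then have "(q = None) = (q' = None)" "card (Sset k t) = card (Sset k t')" using assms(2) by auto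
    then show "graph_iso ?V E F" using iso_same[OF Eq(2) Fq(2) Eq(3) Fq(3)] Eq(1) Fq(1) by simp
  qed
  define Codes where "Codes = (\<lambda>m. (False, m * (n - 1))) ` {m. m \<le> k \<and> even m} \<union> (\<lambda>s. (True, s * (n - 1))) ` {..<k}"
  have img: "phi ?V ` ?O = Codes"
  proof (intro set_eqI iffI)
    fix x assume "x \<in> phi ?V ` ?O"
    then obtain E where E: "E \<in> ?O" "x = phi ?V E" by blast
    obtain q t c where Eq: "E = GG k n q t c" "inv k q t" "\<forall>j<k. c j < n" using rep[OF E(1)] by blast
    have x: "x = (q \<noteq> None, card (Sset k t) * (n - 1))" using phi_GG[OF Eq(2) assms Eq(3)] E(2) Eq(1) by simp
    show "x \<in> Codes"
    proof (cases q)
      case None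
      have "even (card (Sset k t))" using Eq(2) None by (simp add: inv_def)
      moreover have "card (Sset k t) \<le> k"
      proof -
        have "Sset k t \<subseteq> {0..<k}" by (auto simp: Sset_def)
        then have "card (Sset k t) \<le> card {0..<k}" by (intro card_mono) auto
        then show ?thesis by simp
      qed
      ultimately show ?thesis unfolding Codes_def x using None by blast
    next
      case (Some i)
      have i: "i < k" "t i \<noteq> TS" using Eq(2) Some by (auto simp: inv_def)
      have "Sset k t \<subseteq> {0..<k} - {i}" using i by (auto simp: Sset_def)
      then have "card (Sset k t) \<le> card ({0..<k} - {i})" by (intro card_mono) auto
      then have "card (Sset k t) < k" using i by simp
      then show ?thesis unfolding Codes_def x using Some by blast
    qed
  next
    fix x assume "x \<in> Codes"
    then consider (A) m where "m \<le> k" "even m" "x = (False, m * (n - 1))"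
      | (B) s where "s < k" "x = (True, s * (n - 1))"
      unfolding Codes_def by blast
    then show "x \<in> phi ?V ` ?O"
    proof cases
      case (B s)
      have "phi ?V (GG k n (Some 0) (ts s) (\<lambda>_. 0)) = x"
        using phi_GG[OF inv_ts[OF B(1)] assms, of "\<lambda>_. 0"] Sset_ts[OF B(1)] B(2) assms(2) by simp
      then show ?thesis using ts_reach[OF B(1) assms(2)] by blast
    next
      case (A m)
      show ?thesis
      proof (cases "m = 0")
        case True
        have "inv k None (\<lambda>_. TI)" by (simp add: inv_def Sset_def)
        moreover have "Sset k (\<lambda>_. TI) = {}" by (simp add: Sset_def)
        ultimately have "phi ?V (complete_kpartite k n) = x"
          unfolding K_eq using phi_GG[of k None "\<lambda>_. TI" n "\<lambda>_. 0"] assms A True by simp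
        then show ?thesis using lc_orbit.base by blast
      next
        case False
        define s where "s = m - 1"
        have s: "s < k" "odd s" "m = Suc s" using A False by (auto simp: s_def)
        have T: "GG k n (Some 0) (ts s) (\<lambda>_. 0) \<in> ?O" using ts_reach[OF s(1) assms(2)] .
        have t0: "ts s 0 = TC" using s by (simp add: ts_def)
        have L: "local_comp (GG k n (Some 0) (ts s) (\<lambda>_. 0)) (0,0) \<in> ?O"
          using T assms by (intro lc_orbit.step) auto
        have eq: "local_comp (GG k n (Some 0) (ts s) (\<lambda>_. 0)) (0,0) = GG k n (lcq (Some 0) 0) (newt (Some 0) (ts s) 0) ((\<lambda>_. 0)(0 := 0))"
          using t0 assms s by (intro lc_formula) auto
        have iv: "inv k (lcq (Some 0) 0) (newt (Some 0) (ts s) 0)"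
          using inv_step[of k "Some 0" "ts s" 0 0 "\<lambda>_. 0"] inv_ts[OF s(1)] t0 s by simp
        have lq: "lcq (Some 0) 0 = None" by (simp add: lcq_def)
        have cS: "card (Sset k (newt (Some 0) (ts s) 0)) = m"
          using Sset_newt[of 0 k "Some 0" "ts s"] t0 s Sset_ts[OF s(1)] by simp
        have cz: "((\<lambda>_. 0)(0 := 0)) = (\<lambda>_::nat. 0::nat)" by auto
        have cw: "\<forall>j<k. (\<lambda>_::nat. 0::nat) j < n" using assms by simp
        have "phi ?V (local_comp (GG k n (Some 0) (ts s) (\<lambda>_. 0)) (0,0)) = x"
          unfolding eq cz using phi_GG[OF iv assms cw] lq cS A by simp
        then show ?thesis using L by blast
      qed
    qed
  qed
  have cC: "card Codes = k div 2 + 1 + k"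
  proof -
    have i1: "inj_on (\<lambda>m. (False, m * (n - 1))) {m. m \<le> k \<and> even m}" using assms(2) by (auto intro: inj_onI)
    have i2: "inj_on (\<lambda>s. (True, s * (n - 1))) {..<k}" using assms(2) by (auto intro: inj_onI)
    have "card Codes = card ((\<lambda>m. (False, m * (n - 1))) ` {m. m \<le> k \<and> even m}) + card ((\<lambda>s. (True, s * (n - 1))) ` {..<k})"
      unfolding Codes_def by (rule card_Un_disjoint) auto
    also have "\<dots> = k div 2 + 1 + k" using card_image[OF i1] card_image[OF i2] card_even[of k] by simp
    finally show ?thesis .
  qed
  have "num_iso_classes ?V ?O = card (phi ?V ` ?O)"
    unfolding num_iso_classes_def by (rule card_quot[OF iso_iff])
  then show ?thesis using img cC by simp
qed

end
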